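(* (1) If $(\mathsf P,\mathcal O)$ is a semitopology that is Hausdorff and in which every point is quasiregular, then $\mathcal O=\mathcal P(\mathsf P)$. (2) There exists a semitopology that is $T_1$, in which every point is regular (hence quasiregular), and whose set of opens is not the full powerset.
   Context: A semitopology is a pair $(\mathsf P,\mathcal O)$ where $\mathsf P$ is a set and $\mathcal O\subseteq\mathcal P(\mathsf P)$ contains $\varnothing$ and $\mathsf P$ and is closed under arbitrary unions. It is Hausdorff when any two distinct points have disjoint open neighbourhoods, and $T_1$ when for distinct $p_1,p_2$ there are opens $O_1,O_2$ with $p_i\in O_j$ iff $i=j$. Points $p,p'$ are intertwined when every open set containing $p$ intersects every open set containing $p'$; $I(p)$ is the set of points intertwined with $p$; $K(p)=\mathrm{int}(I(p))$ where $\mathrm{int}(R)$ is the union of all open subsets of $R$. $p$ is quasiregular when $K(p)\neq\varnothing$. A set $T$ is topen when it is nonempty, open, and for all open $O,O'$ with $O\cap T\neq\varnothing\neq T\cap O'$ we have $O\cap O'\neq\varnothing$; $p$ is regular when $p\in K(p)$ and $K(p)$ is topen. *)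

theory Defs
  imports Main
begin

definition semitopology :: "'a set \<Rightarrow> 'a set set \<Rightarrow> bool" where
  "semitopology P Op \<longleftrightarrow> Op \<subseteq> Pow P \<and> {} \<in> Op \<and> P \<in> Op \<and>
     (\<forall>X. X \<subseteq> Op \<longrightarrow> \<Union>X \<in> Op)"

definition hausdorff :: "'a set \<Rightarrow> 'a set set \<Rightarrow> bool" where
  "hausdorff P Op \<longleftrightarrow> (\<forall>p1\<in>P. \<forall>p2\<in>P. p1 \<noteq> p2 \<longrightarrow>
     (\<exists>O1\<in>Op. \<exists>O2\<in>Op. p1 \<in> O1 \<and> p2 \<in> O2 \<and> O1 \<inter> O2 = {}))"

definition T1 :: "'a set \<Rightarrow> 'a set set \<Rightarrow> bool" where
  "T1 P Op \<longleftrightarrow> (\<forall>p1\<in>P. \<forall>p2\<in>P. p1 \<noteq> p2 \<longrightarrow>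
     (\<exists>O1\<in>Op. \<exists>O2\<in>Op. p1 \<in> O1 \<and> p2 \<notin> O1 \<and> p2 \<in> O2 \<and> p1 \<notin> O2))"

definition intertwined :: "'a set set \<Rightarrow> 'a \<Rightarrow> 'a \<Rightarrow> bool" where
  "intertwined Op p p' \<longleftrightarrow> (\<forall>U\<in>Op. \<forall>V\<in>Op. p \<in> U \<longrightarrow> p' \<in> V \<longrightarrow> U \<inter> V \<noteq> {})"

definition intertwined_set :: "'a set \<Rightarrow> 'a set set \<Rightarrow> 'a \<Rightarrow> 'a set" where
  "intertwined_set P Op p = {p' \<in> P. intertwined Op p p'}"

definition sinterior :: "'a set set \<Rightarrow> 'a set \<Rightarrow> 'a set" where
  "sinterior Op R = \<Union>{U \<in> Op. U \<subseteq> R}"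

definition community :: "'a set \<Rightarrow> 'a set set \<Rightarrow> 'a \<Rightarrow> 'a set" where
  "community P Op p = sinterior Op (intertwined_set P Op p)"

definition quasiregular :: "'a set \<Rightarrow> 'a set set \<Rightarrow> 'a \<Rightarrow> bool" where
  "quasiregular P Op p \<longleftrightarrow> community P Op p \<noteq> {}"

definition topen :: "'a set set \<Rightarrow> 'a set \<Rightarrow> bool" where
  "topen Op T \<longleftrightarrow> T \<noteq> {} \<and> T \<in> Op \<and>
     (\<forall>U\<in>Op. \<forall>V\<in>Op. U \<inter> T \<noteq> {} \<longrightarrow> T \<inter> V \<noteq> {} \<longrightarrow> U \<inter> V \<noteq> {})"

definition regular :: "'a set \<Rightarrow> 'a set set \<Rightarrow> 'a \<Rightarrow> bool" where
  "regular P Op p \<longleftrightarrow> p \<in> community P Op p \<and> topen Op (community P Op p)"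

end

theory Submission
  imports Defs
begin

lemma part1:
  fixes P :: "'a set" and Op
  assumes st: "semitopology P Op" and h: "hausdorff P Op" and q: "\<forall>p\<in>P. quasiregular P Op p"
  shows "Op = Pow P"
proof -
  have sub: "Op \<subseteq> Pow P" and un: "\<And>X. X \<subseteq> Op \<Longrightarrow> \<Union>X \<in> Op"
    using st unfolding semitopology_def by auto
  have I: "intertwined_set P Op p \<subseteq> {p}" if pP: "p \<in> P" for p
  proof
    fix x assume x: "x \<in> intertwined_set P Op p"
    show "x \<in> {p}"
    proof (rule ccontr)
      assume "x \<notin> {p}"
      then have "x \<noteq> p" by simp
      moreover have "x \<in> P" using x unfolding intertwined_set_def by simp
      ultimately obtain O1 O2 where "O1\<in>Op" "O2\<in>Op" "p\<in>O1" "x\<in>O2" "O1\<inter>O2={}"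
        using h pP unfolding hausdorff_def by metis
      with x show False unfolding intertwined_set_def intertwined_def by blast
    qed
  qed
  have single: "{p} \<in> Op" if "p \<in> P" for p
  proof -
    have "community P Op p \<noteq> {}" using q that unfolding quasiregular_def by auto
    then obtain U where U: "U \<in> Op" "U \<subseteq> intertwined_set P Op p" "U \<noteq> {}"
      unfolding community_def sinterior_def by auto
    with I[OF that] have "U = {p}" by blast
    with U show ?thesis by simp
  qed
  have "S \<in> Op" if "S \<subseteq> P" for S
  proof -
    have e: "\<Union>((\<lambda>p. {p}) ` S) = S" by auto
    have "(\<lambda>p. {p}) ` S \<subseteq> Op" using single that by auto
    from un[OF this] show ?thesis unfolding e .
  qed
  with sub show ?thesis by auto
qed

definition P3 :: "nat set" where "P3 = {0,1,2}"
definition O3 :: "nat set set" where "O3 = {U. U \<subseteq> P3 \<and> (\<forall>a. U \<noteq> {a})}"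

lemma two_elems: "U \<noteq> {} \<Longrightarrow> (\<forall>a. U \<noteq> {a}) \<Longrightarrow> \<exists>a b. a \<in> U \<and> b \<in> U \<and> a \<noteq> b"
  by blast

lemma O3_int: "U \<in> O3 \<Longrightarrow> V \<in> O3 \<Longrightarrow> U \<noteq> {} \<Longrightarrow> V \<noteq> {} \<Longrightarrow> U \<inter> V \<noteq> {}"
proof -
  assume a: "U \<in> O3" "V \<in> O3" "U \<noteq> {}" "V \<noteq> {}"
  obtain x y where xy: "x \<in> U" "y \<in> U" "x \<noteq> y" using a two_elems unfolding O3_def by blast
  obtain z w where zw: "z \<in> V" "w \<in> V" "z \<noteq> w" using a two_elems unfolding O3_def by blast
  have r: "x \<in> {0,1,2}" "y \<in> {0,1,2}" "z \<in> {0,1,2}" "w \<in> {0,1,2::nat}"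
    using a xy zw unfolding O3_def P3_def by auto
  show ?thesis
  proof
    assume "U \<inter> V = {}"
    then have "x \<noteq> z" "x \<noteq> w" "y \<noteq> z" "y \<noteq> w" using xy zw by auto
    with r xy(3) zw(3) show False by simp presburger
  qed
qed

lemma part2: "semitopology P3 O3 \<and> T1 P3 O3 \<and> (\<forall>p\<in>P3. regular P3 O3 p) \<and> O3 \<noteq> Pow P3"
proof (intro conjI)
  show "semitopology P3 O3"
    unfolding semitopology_def
  proof (intro conjI allI impI)
    show "O3 \<subseteq> Pow P3" unfolding O3_def by auto
    show "{} \<in> O3" unfolding O3_def by auto
    show "P3 \<in> O3" unfolding O3_def P3_def by auto
    fix X assume X: "X \<subseteq> O3"
    have "\<Union>X \<subseteq> P3" using X unfolding O3_def by auto
    moreover have "\<Union>X \<noteq> {a}" for a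
    proof
      assume e: "\<Union>X = {a}"
      then obtain Y where "Y \<in> X" "a \<in> Y" by auto
      moreover have "Y \<subseteq> {a}" using e \<open>Y \<in> X\<close> by auto
      ultimately have "Y = {a}" by auto
      with X \<open>Y \<in> X\<close> show False unfolding O3_def by auto
    qed
    ultimately show "\<Union>X \<in> O3" unfolding O3_def by auto
  qed
  show "T1 P3 O3" unfolding T1_def
  proof (intro ballI impI)
    fix p1 p2 assume p: "p1 \<in> P3" "p2 \<in> P3" "p1 \<noteq> p2"
    define r where "r = (if 0 \<noteq> p1 \<and> 0 \<noteq> p2 then 0 else if 1 \<noteq> p1 \<and> 1 \<noteq> p2 then 1 else (2::nat))"
    have p': "p1 = 0 \<or> p1 = 1 \<or> p1 = 2" "p2 = 0 \<or> p2 = 1 \<or> p2 = 2" using p unfolding P3_def by simp_all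
    have r: "r \<in> P3" "r \<noteq> p1" "r \<noteq> p2"
      unfolding r_def P3_def using p' p(3) by auto
    have ns: "{u, r} \<noteq> {a}" if "u \<noteq> r" for u a using that by blast
    have a: "{p1, r} \<in> O3" "{p2, r} \<in> O3"
      unfolding O3_def using r p(1,2) ns by auto
    have b: "p1 \<in> {p1, r} \<and> p2 \<notin> {p1, r} \<and> p2 \<in> {p2, r} \<and> p1 \<notin> {p2, r}"
      using r p(3) by simp
    show "\<exists>O1\<in>O3. \<exists>O2\<in>O3. p1 \<in> O1 \<and> p2 \<notin> O1 \<and> p2 \<in> O2 \<and> p1 \<notin> O2"
      using a b by (intro bexI[of _ "{p1, r}"] bexI[of _ "{p2, r}"])
  qed
  have P3O: "P3 \<in> O3" unfolding O3_def P3_def by auto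
  have IP: "intertwined_set P3 O3 p = P3" for p
    unfolding intertwined_set_def intertwined_def using O3_int by blast
  have K: "community P3 O3 p = P3" for p
    unfolding community_def sinterior_def IP using P3O unfolding O3_def by auto
  show "\<forall>p\<in>P3. regular P3 O3 p"
  proof
    fix p assume "p \<in> P3"
    have "P3 \<noteq> {}" unfolding P3_def by auto
    moreover have "\<forall>U\<in>O3. \<forall>V\<in>O3. U \<inter> P3 \<noteq> {} \<longrightarrow> P3 \<inter> V \<noteq> {} \<longrightarrow> U \<inter> V \<noteq> {}"
      using O3_int by blast
    ultimately show "regular P3 O3 p"
      unfolding regular_def K topen_def using P3O \<open>p \<in> P3\<close> by blast
  qed
  show "O3 \<noteq> Pow P3"
  proof
    assume "O3 = Pow P3"
    then have "{0} \<in> O3" unfolding P3_def by auto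
    then show False unfolding O3_def by auto
  qed
qed

theorem lemma4p8:
  shows "(\<forall>(P :: 'a set) (Op :: 'a set set).
            semitopology P Op \<and> hausdorff P Op \<and> (\<forall>p\<in>P. quasiregular P Op p)
            \<longrightarrow> Op = Pow P)
       \<and> (\<exists>(P :: nat set) (Op :: nat set set).
            semitopology P Op \<and> T1 P Op \<and> (\<forall>p\<in>P. regular P Op p) \<and> Op \<noteq> Pow P)"
  using part1 part2 by blast

end
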